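(* Let $n\ge2$, $k\ge1$, and let $\partial_k$ denote the distance in $H_{n,k}$. Let $\mathbf z^{01}=x_1\ldots x_k$ be any vertex with $x_i=0$ for all odd $i$ and $x_i\neq0$ for all even $i$, and let $\mathbf z^{10}=x_1\ldots x_k$ be any vertex with $x_i\ne0$ for all odd $i$ and $x_i=0$ for all even $i$. Then (a) $\partial_k(\mathbf z^{01},\mathbf r)=\partial_k(\mathbf z^{10},P)=k-1$; (b) $\partial_k(\mathbf z^{10},\mathbf r)=\partial_k(\mathbf z^{01},P)=k$.
   Context: Let $n\ge 2$ and $k\ge 1$ be integers. $H_{n,k}$ is the simple undirected graph with vertex set $V_{n,k}=\mathbb{Z}_n^k$ (so $|V_{n,k}|=n^k$), whose vertices are written as strings $x_1x_2\ldots x_k$ with $x_j\in\mathbb{Z}_n=\{0,1,\ldots,n-1\}$. Two distinct vertices are adjacent if and only if they are related by one of the following rules. For $i=0$ the prefix $x_1\ldots x_i$ is empty, and "$0\ldots0$" denotes a string of zeros completing the word to length $k$. (R1) $x_1\ldots x_{k-1}x_k\sim x_1\ldots x_{k-1}y_k$ whenever $y_k\neq x_k$. (R2) For $0\le i\le k-2$: $x_1\ldots x_i0\ldots0\sim x_1\ldots x_ix_{i+1}\ldots x_k$ whenever $x_j\neq 0$ for all $i+1\le j\le k$. (R3) For $1\le i\le k-1$: $x_1\ldots x_{i-1}x_i0\ldots0\sim x_1\ldots x_{i-1}y_i0\ldots0$ whenever $x_i,y_i\neq0$ and $x_i\ne y_i$. In particular, $H_{n,1}$ is the complete graph $K_n$.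 The root of $H_{n,k}$ is $\mathbf r=00\ldots0$; a vertex of $H_{n,k}$ is peripheral if all its coordinates are nonzero, and $P$ denotes the set of peripheral vertices. For a vertex $\mathbf x$ and a vertex set $U$, $\partial(\mathbf x,U)=\min_{\mathbf u\in U}\partial(\mathbf x,\mathbf u)$. *)

theory Defs
  imports Main "HOL-Library.Extended_Nat"
begin

text \<open>Vertices of H_{n,k}: words x_1...x_k over {0..n-1}, represented as lists of
  length k; the paper's coordinate x_i is the list entry at (0-based) index i-1.\<close>

definition hvert :: "nat \<Rightarrow> nat \<Rightarrow> nat list \<Rightarrow> bool" where
  "hvert n k x \<longleftrightarrow> length x = k \<and> set x \<subseteq> {..<n}"

definition rule1 :: "nat \<Rightarrow> nat list \<Rightarrow> nat list \<Rightarrow> bool" where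
  "rule1 k x y \<longleftrightarrow> take (k - 1) x = take (k - 1) y \<and> x ! (k - 1) \<noteq> y ! (k - 1)"

text \<open>Rule R2 (one orientation): for 0 <= i <= k-2,
  x_1..x_i 0..0  ~  x_1..x_i y_{i+1}..y_k  with all y_j (j >= i+1) nonzero.\<close>
definition rule2 :: "nat \<Rightarrow> nat list \<Rightarrow> nat list \<Rightarrow> bool" where
  "rule2 k x y \<longleftrightarrow> (\<exists>i. i + 2 \<le> k \<and> x = take i y @ replicate (k - i) 0
       \<and> (\<forall>j. i \<le> j \<and> j < k \<longrightarrow> y ! j \<noteq> 0))"

definition rule3 :: "nat \<Rightarrow> nat list \<Rightarrow> nat list \<Rightarrow> bool" where
  "rule3 k x y \<longleftrightarrow> (\<exists>i. 1 \<le> i \<and> i + 1 \<le> k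
       \<and> take (i - 1) x = take (i - 1) y
       \<and> x ! (i - 1) \<noteq> 0 \<and> y ! (i - 1) \<noteq> 0 \<and> x ! (i - 1) \<noteq> y ! (i - 1)
       \<and> drop i x = replicate (k - i) 0 \<and> drop i y = replicate (k - i) 0)"

definition hadj :: "nat \<Rightarrow> nat \<Rightarrow> nat list \<Rightarrow> nat list \<Rightarrow> bool" where
  "hadj n k x y \<longleftrightarrow> hvert n k x \<and> hvert n k y \<and> x \<noteq> y \<and>
     (rule1 k x y \<or> rule2 k x y \<or> rule2 k y x \<or> rule3 k x y)"

fun hwalk :: "nat \<Rightarrow> nat \<Rightarrow> nat \<Rightarrow> nat list \<Rightarrow> nat list \<Rightarrow> bool" where
  "hwalk n k 0 x y \<longleftrightarrow> hvert n k x \<and> x = y"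
| "hwalk n k (Suc m) x y \<longleftrightarrow> (\<exists>z. hadj n k x z \<and> hwalk n k m z y)"

definition hdist :: "nat \<Rightarrow> nat \<Rightarrow> nat list \<Rightarrow> nat list \<Rightarrow> enat" where
  "hdist n k x y = (INF m \<in> {m. hwalk n k m x y}. enat m)"

definition hdist_set :: "nat \<Rightarrow> nat \<Rightarrow> nat list \<Rightarrow> nat list set \<Rightarrow> enat" where
  "hdist_set n k x U = (INF u \<in> U. hdist n k x u)"

definition hroot :: "nat \<Rightarrow> nat list" where
  "hroot k = replicate k 0"

definition hperiph :: "nat \<Rightarrow> nat \<Rightarrow> nat list set" where
  "hperiph n k = {x. hvert n k x \<and> (\<forall>i<k. x ! i \<noteq> 0)}"

end

theory Submission
  imports Defs
begin

fun altc :: "bool list \<Rightarrow> nat" where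
  "altc (a # b # r) = (if a \<noteq> b then 1 else 0) + altc (b # r)"
| "altc _ = 0"

definition pat :: "nat list \<Rightarrow> bool list" where
  "pat x = map (\<lambda>v. v \<noteq> 0) x"

definition phi :: "bool \<Rightarrow> nat list \<Rightarrow> nat" where
  "phi c x = altc (c # pat x)"

lemma altc_snoc: "l \<noteq> [] \<Longrightarrow> altc (l @ [a]) = altc l + (if last l \<noteq> a then 1 else 0)"
  by (induction l rule: altc.induct) auto

lemma altc_rep: "l \<noteq> [] \<Longrightarrow> altc (l @ replicate m a) = altc l + (if m > 0 \<and> last l \<noteq> a then 1 else 0)"
proof (induction m)
  case 0 then show ?case by simp
next
  case (Suc m)
  have "l @ replicate (Suc m) a = (l @ replicate m a) @ [a]"
    by (simp add: replicate_append_same)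
  have L: "last (l @ replicate m a) = (if m = 0 then last l else a)"
    using Suc.prems by (cases m) (auto simp: last_append)
  have 1: "altc (l @ replicate (Suc m) a) = altc (l @ replicate m a) + (if last (l @ replicate m a) \<noteq> a then 1 else 0)"
    by (subst \<open>l @ replicate (Suc m) a = (l @ replicate m a) @ [a]\<close>, rule altc_snoc) (use Suc.prems in simp)
  have 2: "altc (l @ replicate (Suc m) a) = altc l + (if 0 < m \<and> last l \<noteq> a then 1 else 0) + (if (if m = 0 then last l else a) \<noteq> a then 1 else 0)"
    by (simp only: 1 Suc.IH[OF Suc.prems] L)
  show ?case by (subst 2) (cases "m = 0", simp_all)
qed

lemma suffix_bound:
  assumes "pat x = q @ replicate m a" "pat y = q @ replicate m b"
  shows "phi c x \<le> phi c y + 1"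
proof -
  have "phi c x = altc (c # q) + (if m > 0 \<and> last (c#q) \<noteq> a then 1 else 0)"
    unfolding phi_def using assms(1) altc_rep[of "c#q" m a] by simp
  moreover have "phi c y = altc (c # q) + (if m > 0 \<and> last (c#q) \<noteq> b then 1 else 0)"
    unfolding phi_def using assms(2) altc_rep[of "c#q" m b] by simp
  ultimately show ?thesis by simp
qed

lemma rule2_pat:
  assumes "rule2 k u v" "length v = k"
  shows "\<exists>q m. pat u = q @ replicate m False \<and> pat v = q @ replicate m True"
proof -
  obtain i where i: "i + 2 \<le> k" "u = take i v @ replicate (k - i) 0"
    "\<forall>j. i \<le> j \<and> j < k \<longrightarrow> v ! j \<noteq> 0"
    using assms(1) unfolding rule2_def by blast
  have "map (\<lambda>v. v \<noteq> 0) (drop i v) = replicate (k - i) True"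
    by (rule nth_equalityI) (use i assms(2) in auto)
  then have "pat v = pat (take i v) @ replicate (k - i) True"
    unfolding pat_def by (metis append_take_drop_id map_append)
  moreover have "pat u = pat (take i v) @ replicate (k - i) False"
    using i(2) by (simp add: pat_def)
  ultimately show ?thesis by blast
qed

lemma adj_bound:
  assumes "hadj n k x y"
  shows "phi c x \<le> phi c y + 1"
proof -
  have lx: "length x = k" and ly: "length y = k" and ne: "x \<noteq> y"
    using assms by (auto simp: hadj_def hvert_def)
  have k1: "k \<ge> 1" using lx ly ne by (cases k) auto
  have R: "rule1 k x y \<or> rule2 k x y \<or> rule2 k y x \<or> rule3 k x y"
    using assms by (simp add: hadj_def)
  moreover
  { assume r: "rule1 k x y"
    have sx: "pat x = take (k-1) (pat x) @ replicate 1 (x ! (k-1) \<noteq> 0)"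
    proof (rule nth_equalityI)
      show "length (pat x) = length (take (k-1) (pat x) @ replicate 1 (x ! (k-1) \<noteq> 0))"
        using lx k1 by (simp add: pat_def)
      fix j assume j: "j < length (pat x)"
      show "pat x ! j = (take (k-1) (pat x) @ replicate 1 (x ! (k-1) \<noteq> 0)) ! j"
      proof (cases "j < k - 1")
        case True then show ?thesis using j lx by (simp add: nth_append pat_def)
      next
        case False then have "j = k - 1" using j lx by (simp add: pat_def)
        then show ?thesis using j lx k1 by (simp add: nth_append pat_def)
      qed
    qed
    have sy: "pat y = take (k-1) (pat y) @ replicate 1 (y ! (k-1) \<noteq> 0)"
    proof (rule nth_equalityI)
      show "length (pat y) = length (take (k-1) (pat y) @ replicate 1 (y ! (k-1) \<noteq> 0))"
        using ly k1 by (simp add: pat_def)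
      fix j assume j: "j < length (pat y)"
      show "pat y ! j = (take (k-1) (pat y) @ replicate 1 (y ! (k-1) \<noteq> 0)) ! j"
      proof (cases "j < k - 1")
        case True then show ?thesis using j ly by (simp add: nth_append pat_def)
      next
        case False then have "j = k - 1" using j ly by (simp add: pat_def)
        then show ?thesis using j ly k1 by (simp add: nth_append pat_def)
      qed
    qed
    have "take (k-1) (pat x) = take (k-1) (pat y)" using r by (simp add: rule1_def pat_def take_map)
    then have ?thesis using suffix_bound[of x "take (k-1) (pat y)" 1 "x ! (k-1) \<noteq> 0" y "y ! (k-1) \<noteq> 0" c] sx sy by simp }
  moreover
  { assume r: "rule2 k x y"
    then obtain q m where "pat x = q @ replicate m False" "pat y = q @ replicate m True"
      using rule2_pat ly by blast
    then have ?thesis using suffix_bound by blast }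
  moreover
  { assume r: "rule2 k y x"
    then obtain q m where "pat y = q @ replicate m False" "pat x = q @ replicate m True"
      using rule2_pat lx by blast
    then have ?thesis using suffix_bound by blast }
  moreover
  { assume r: "rule3 k x y"
    then obtain i where i: "1 \<le> i" "i + 1 \<le> k" "take (i - 1) x = take (i - 1) y"
       "x ! (i - 1) \<noteq> 0" "y ! (i - 1) \<noteq> 0"
       "drop i x = replicate (k - i) 0" "drop i y = replicate (k - i) 0"
      unfolding rule3_def by blast
    have "pat x = pat y"
    proof (rule nth_equalityI)
      show "length (pat x) = length (pat y)" using lx ly by (simp add: pat_def)
      fix j assume j: "j < length (pat x)"
      show "pat x ! j = pat y ! j"
      proof (cases "j < i - 1")
        case True
        have "x ! j = take (i-1) x ! j" using True by simp
        also have "\<dots> = take (i-1) y ! j" using i(3) by simp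
        also have "\<dots> = y ! j" using True by simp
        finally show ?thesis using j lx ly by (simp add: pat_def)
      next
        case False
        show ?thesis
        proof (cases "j = i - 1")
          case True then show ?thesis using i j lx ly by (simp add: pat_def)
        next
          case F2: False
          then have "j \<ge> i" using False by auto
          have jk: "j < k" using j lx by (simp add: pat_def)
          have "x ! j = drop i x ! (j - i)" using \<open>j \<ge> i\<close> jk lx by simp
          also have "\<dots> = 0" using i(6) \<open>j \<ge> i\<close> jk by simp
          finally have "x ! j = 0" .
          have "y ! j = drop i y ! (j - i)" using \<open>j \<ge> i\<close> jk ly by simp
          also have "\<dots> = 0" using i(7) \<open>j \<ge> i\<close> jk by simp
          finally have "y ! j = 0" .
          show ?thesis using j lx ly \<open>x ! j = 0\<close> \<open>y ! j = 0\<close> by (simp add: pat_def)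
        qed
      qed
    qed
    then have ?thesis by (simp add: phi_def) }
  ultimately show ?thesis by blast
qed

lemma walk_bound: "hwalk n k m x y \<Longrightarrow> phi c x \<le> phi c y + m"
proof (induction m arbitrary: x)
  case 0 then show ?case by simp
next
  case (Suc m)
  then obtain z where "hadj n k x z" "hwalk n k m z y" by auto
  then show ?case using Suc.IH adj_bound[of n k x z c] by fastforce
qed

lemma hwalk_append: "hwalk n k m x y \<Longrightarrow> hwalk n k m' y w \<Longrightarrow> hwalk n k (m + m') x w"
  by (induction m arbitrary: x) auto

lemma altc_alt: "(\<forall>i. Suc i < length l \<longrightarrow> l ! i \<noteq> l ! Suc i) \<Longrightarrow> altc l = length l - 1"
proof (induction l rule: altc.induct)
  case (1 a b r)
  have "\<forall>i. Suc i < length (b # r) \<longrightarrow> (b # r) ! i \<noteq> (b # r) ! Suc i"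
  proof (intro allI impI)
    fix i assume "Suc i < length (b # r)"
    then show "(b # r) ! i \<noteq> (b # r) ! Suc i" using "1.prems"[rule_format, of "Suc i"] by simp
  qed
  moreover have "a \<noteq> b" using "1.prems"[rule_format, of 0] by simp
  ultimately show ?case using "1.IH" by simp
qed auto

lemma phi_alt:
  assumes "length z = k" "k \<ge> 1" "\<forall>i. Suc i < k \<longrightarrow> (z ! i = 0) \<noteq> (z ! Suc i = 0)"
  shows "phi c z = (if c \<noteq> (z ! 0 \<noteq> 0) then 1 else 0) + (k - 1)"
proof -
  obtain a r where zr: "z = a # r" using assms(1,2) by (cases z) auto
  have "altc (pat z) = length (pat z) - 1"
    by (rule altc_alt) (use assms in \<open>auto simp: pat_def\<close>)
  then show ?thesis using zr assms(1) by (simp add: phi_def pat_def)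
qed

lemma phi_const: "phi c (replicate k a) = (if k > 0 \<and> c \<noteq> (a \<noteq> 0) then 1 else 0)"
proof -
  have "altc ([c] @ replicate k (a \<noteq> 0)) = altc [c] + (if k > 0 \<and> last [c] \<noteq> (a \<noteq> 0) then 1 else 0)"
    by (rule altc_rep) simp
  then show ?thesis by (simp add: phi_def pat_def)
qed

lemma adj_suffix:
  assumes "length u = i" "i < k" "set u \<subseteq> {..<n}" "a < n" "b < n" "(a = 0) \<noteq> (b = 0)"
  shows "hadj n k (u @ replicate (k-i) a) (u @ replicate (k-i) b)"
proof -
  let ?x = "u @ replicate (k-i) a" and ?y = "u @ replicate (k-i) b"
  have hv: "hvert n k ?x" "hvert n k ?y" using assms by (auto simp: hvert_def)
  have ab: "a \<noteq> b" using assms(6) by auto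
  have xi: "?x ! i = a" "?y ! i = b" using assms(1,2) by (auto simp: nth_append)
  have ne: "?x \<noteq> ?y" using xi ab by metis
  have R: "rule1 k ?x ?y \<or> rule2 k ?x ?y \<or> rule2 k ?y ?x"
  proof (cases "k - i = 1")
    case True
    then have "k - 1 = i" using assms(2) by simp
    then have "rule1 k ?x ?y" using xi ab assms(1) by (simp add: rule1_def)
    then show ?thesis by blast
  next
    case False
    then have i2: "i + 2 \<le> k" using assms(2) by simp
    have tk: "take i ?x = u" "take i ?y = u" using assms(1) by simp_all
    show ?thesis
    proof (cases "a = 0")
      case True
      then have "b \<noteq> 0" using assms(6) by simp
      then have "\<forall>j. i \<le> j \<and> j < k \<longrightarrow> ?y ! j \<noteq> 0" using assms(1) by (auto simp: nth_append)
      then have "rule2 k ?x ?y" unfolding rule2_def using i2 tk True by (intro exI[of _ i]) simp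
      then show ?thesis by blast
    next
      case False
      then have "b = 0" using assms(6) by simp
      have "\<forall>j. i \<le> j \<and> j < k \<longrightarrow> ?x ! j \<noteq> 0" using assms(1) False by (auto simp: nth_append)
      then have "rule2 k ?y ?x" unfolding rule2_def using i2 tk \<open>b = 0\<close> by (intro exI[of _ i]) simp
      then show ?thesis by blast
    qed
  qed
  show ?thesis using hv ne R by (auto simp: hadj_def)
qed

lemma walk_down:
  assumes "hvert n k z" "\<forall>i. Suc i < k \<longrightarrow> (z ! i = 0) \<noteq> (z ! Suc i = 0)" "Suc j \<le> k"
  shows "hwalk n k j (take (Suc j) z @ replicate (k - Suc j) (z ! j)) (replicate k (z ! 0))"
  using assms(3)
proof (induction j)
  case 0
  have lz: "length z = k" and sz: "set z \<subseteq> {..<n}" using assms(1) by (auto simp: hvert_def)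
  have kpos: "0 < k" using "0" by simp
  have "z ! 0 \<in> set z" using lz kpos by (intro nth_mem) simp
  then have z0: "z ! 0 < n" using sz by blast
  have tk: "take (Suc 0) z = [z ! 0]" using lz kpos by (simp add: take_Suc_conv_app_nth)
  have rk: "replicate k (z ! 0) = z ! 0 # replicate (k - Suc 0) (z ! 0)"
    using kpos by (simp add: replicate_Suc[symmetric] del: replicate_Suc)
  have "take (Suc 0) z @ replicate (k - Suc 0) (z ! 0) = replicate k (z ! 0)"
    unfolding tk rk by simp
  moreover have "hvert n k (replicate k (z ! 0))" using z0 by (simp add: hvert_def subset_iff)
  ultimately show ?case by simp
next
  case (Suc j)
  have lz: "length z = k" and sz: "set z \<subseteq> {..<n}" using assms(1) by (auto simp: hvert_def)
  have e: "take (Suc (Suc j)) z @ replicate (k - Suc (Suc j)) (z ! Suc j)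
        = take (Suc j) z @ replicate (k - Suc j) (z ! Suc j)"
  proof -
    have t: "take (Suc (Suc j)) z = take (Suc j) z @ [z ! Suc j]"
      using Suc.prems lz by (simp add: take_Suc_conv_app_nth)
    have d: "k - Suc j = Suc (k - Suc (Suc j))" using Suc.prems by simp
    show ?thesis unfolding t d by (simp only: append_assoc replicate_Suc append_Cons append_Nil)
  qed
  have "z ! Suc j \<in> set z" "z ! j \<in> set z" using lz Suc.prems by (auto intro!: nth_mem)
  then have zn: "z ! Suc j < n" "z ! j < n" using sz by blast+
  have st: "set (take (Suc j) z) \<subseteq> {..<n}" by (rule subset_trans[OF set_take_subset sz])
  have "hadj n k (take (Suc j) z @ replicate (k - Suc j) (z ! Suc j)) (take (Suc j) z @ replicate (k - Suc j) (z ! j))"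
    by (rule adj_suffix) (use Suc.prems lz zn st assms(2) in auto)
  moreover have "hwalk n k j (take (Suc j) z @ replicate (k - Suc j) (z ! j)) (replicate k (z ! 0))"
    using Suc.IH Suc.prems by simp
  ultimately show ?case unfolding e hwalk.simps by blast
qed

lemma walk_full:
  assumes "hvert n k z" "\<forall>i. Suc i < k \<longrightarrow> (z ! i = 0) \<noteq> (z ! Suc i = 0)" "k \<ge> 1"
  shows "hwalk n k (k - 1) z (replicate k (z ! 0))"
proof -
  have lz: "length z = k" using assms(1) by (simp add: hvert_def)
  have "Suc (k - 1) = k" using assms(3) by simp
  then show ?thesis using walk_down[OF assms(1,2), of "k-1"] lz by simp
qed

lemma hdist_eq:
  assumes "hwalk n k d x y" "\<And>m. hwalk n k m x y \<Longrightarrow> d \<le> m"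
  shows "hdist n k x y = enat d"
  unfolding hdist_def
proof (rule antisym)
  show "(INF m \<in> {m. hwalk n k m x y}. enat m) \<le> enat d" using assms(1) by (simp add: INF_lower)
  show "enat d \<le> (INF m \<in> {m. hwalk n k m x y}. enat m)" using assms(2) by (auto intro!: INF_greatest)
qed

lemma hdist_set_eq:
  assumes "u0 \<in> U" "hdist n k x u0 = enat d" "\<And>u m. u \<in> U \<Longrightarrow> hwalk n k m x u \<Longrightarrow> d \<le> m"
  shows "hdist_set n k x U = enat d"
  unfolding hdist_set_def
proof (rule antisym)
  show "(INF u \<in> U. hdist n k x u) \<le> enat d" using assms(1,2) by (metis INF_lower)
  show "enat d \<le> (INF u \<in> U. hdist n k x u)"
    unfolding hdist_def using assms(3) by (auto intro!: INF_greatest)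
qed

lemma altc_same: "altc (c # replicate k c) = 0"
  by (induction k) auto

theorem mainTheorem7:
  fixes n k :: nat and z01 z10 :: "nat list"
  assumes "n \<ge> 2" and "k \<ge> 1"
    and "hvert n k z01" and "hvert n k z10"
    and "\<forall>i<k. (even i \<longrightarrow> z01 ! i = 0) \<and> (odd i \<longrightarrow> z01 ! i \<noteq> 0)"
    and "\<forall>i<k. (even i \<longrightarrow> z10 ! i \<noteq> 0) \<and> (odd i \<longrightarrow> z10 ! i = 0)"
  shows "hdist n k z01 (hroot k) = enat (k - 1) \<and> hdist_set n k z10 (hperiph n k) = enat (k - 1)
       \<and> hdist n k z10 (hroot k) = enat k \<and> hdist_set n k z01 (hperiph n k) = enat k"
proof -
  have a01: "\<forall>i. Suc i < k \<longrightarrow> (z01 ! i = 0) \<noteq> (z01 ! Suc i = 0)"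
  proof (intro allI impI)
    fix i assume "Suc i < k"
    then show "(z01 ! i = 0) \<noteq> (z01 ! Suc i = 0)" using assms(5)[rule_format, of i] assms(5)[rule_format, of "Suc i"]
      by (cases "even i") auto
  qed
  have a10: "\<forall>i. Suc i < k \<longrightarrow> (z10 ! i = 0) \<noteq> (z10 ! Suc i = 0)"
  proof (intro allI impI)
    fix i assume "Suc i < k"
    then show "(z10 ! i = 0) \<noteq> (z10 ! Suc i = 0)" using assms(6)[rule_format, of i] assms(6)[rule_format, of "Suc i"]
      by (cases "even i") auto
  qed
  have l01: "length z01 = k" and l10: "length z10 = k" using assms(3,4) by (auto simp: hvert_def)
  have z01_0: "z01 ! 0 = 0" and z10_0: "z10 ! 0 \<noteq> 0" using assms(2,5,6) by auto
  have "z10 ! 0 \<in> set z10" using l10 assms(2) by (intro nth_mem) simp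
  then have z10_n: "z10 ! 0 < n" using assms(4) by (auto simp: hvert_def)
  have p01: "phi c z01 = (if c then 1 else 0) + (k - 1)" for c
    using phi_alt[OF l01 assms(2) a01, of c] z01_0 by simp
  have p10: "phi c z10 = (if c then 0 else 1) + (k - 1)" for c
    using phi_alt[OF l10 assms(2) a10, of c] z10_0 by simp
  have proot: "phi False (hroot k) = 0" by (simp add: hroot_def phi_const)
  have pper: "phi True u = 0" if "u \<in> hperiph n k" for u
  proof -
    have "pat u = replicate k True" using that
      by (auto simp: hperiph_def hvert_def pat_def intro!: nth_equalityI)
    then show ?thesis by (simp add: phi_def altc_same)
  qed
  have w01: "hwalk n k (k - 1) z01 (hroot k)"
    using walk_full[OF assms(3) a01 assms(2)] z01_0 by (simp add: hroot_def)
  have w10: "hwalk n k (k - 1) z10 (replicate k (z10 ! 0))"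
    using walk_full[OF assms(4) a10 assms(2)] .
  have kk: "k - 0 = k" by simp
  have adj1: "hadj n k (replicate k (z10 ! 0)) (hroot k)"
    using adj_suffix[of "[]" 0 k n "z10 ! 0" 0] assms(1,2) z10_n z10_0 by (simp add: hroot_def)
  have adj2: "hadj n k (hroot k) (replicate k 1)"
    using adj_suffix[of "[]" 0 k n 0 1] assms(1,2) by (simp add: hroot_def)
  have hvr: "hvert n k (hroot k)" using assms(1) by (simp add: hroot_def hvert_def subset_iff)
  have hv1: "hvert n k (replicate k 1)" using assms(1) by (simp add: hvert_def subset_iff)
  have hvc: "hvert n k (replicate k (z10 ! 0))" using z10_n by (simp add: hvert_def subset_iff)
  have k1: "k - 1 + 1 = k" using assms(2) by simp
  have w10r: "hwalk n k k z10 (hroot k)"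
    using hwalk_append[OF w10, of 1 "hroot k"] adj1 hvr k1 by auto
  have w01p: "hwalk n k k z01 (replicate k 1)"
    using hwalk_append[OF w01, of 1 "replicate k 1"] adj2 hv1 k1 by auto
  have per1: "replicate k 1 \<in> hperiph n k" using hv1 by (simp add: hperiph_def)
  have perc: "replicate k (z10 ! 0) \<in> hperiph n k" using hvc z10_0 by (simp add: hperiph_def)
  have d1: "hdist n k z01 (hroot k) = enat (k - 1)"
  proof (rule hdist_eq[OF w01])
    fix m assume "hwalk n k m z01 (hroot k)"
    then show "k - 1 \<le> m" using walk_bound[of n k m z01 "hroot k" False] p01 proot by simp
  qed
  have d3: "hdist n k z10 (hroot k) = enat k"
  proof (rule hdist_eq[OF w10r])
    fix m assume "hwalk n k m z10 (hroot k)"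
    then show "k \<le> m" using walk_bound[of n k m z10 "hroot k" False] p10 proot assms(2) by simp
  qed
  have d2: "hdist_set n k z10 (hperiph n k) = enat (k - 1)"
  proof (rule hdist_set_eq[OF perc])
    show "hdist n k z10 (replicate k (z10 ! 0)) = enat (k - 1)"
    proof (rule hdist_eq[OF w10])
      fix m assume "hwalk n k m z10 (replicate k (z10 ! 0))"
      then show "k - 1 \<le> m" using walk_bound[of n k m z10 _ True] p10 pper[OF perc] by fastforce
    qed
    fix u m assume "u \<in> hperiph n k" "hwalk n k m z10 u"
    then show "k - 1 \<le> m" using walk_bound[of n k m z10 u True] p10 pper by fastforce
  qed
  have d4: "hdist_set n k z01 (hperiph n k) = enat k"
  proof (rule hdist_set_eq[OF per1])
    show "hdist n k z01 (replicate k 1) = enat k"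
    proof (rule hdist_eq[OF w01p])
      fix m assume "hwalk n k m z01 (replicate k 1)"
      then show "k \<le> m" using walk_bound[of n k m z01 _ True] p01 pper[OF per1] assms(2) by fastforce
    qed
    fix u m assume "u \<in> hperiph n k" "hwalk n k m z01 u"
    then show "k \<le> m" using walk_bound[of n k m z01 u True] p01 pper assms(2) by fastforce
  qed
  show ?thesis using d1 d2 d3 d4 by blast
qed

end
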